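(* Let $(R,\mathfrak m)$ be a Noetherian local ring and $\mathfrak a_\bullet=(\mathfrak a_m)_{m\ge0}$ a graded sequence of $\mathfrak m$-primary ideals ($\mathfrak a_0=R$, $\mathfrak a_m\supseteq\mathfrak a_{m+1}$, $\mathfrak a_m\mathfrak a_{m'}\subseteq\mathfrak a_{m+m'}$). Assume that the linear topology on $R$ defined by $\mathfrak a_1\supset\mathfrak a_2\supset\cdots$ coincides with the $\mathfrak m$-adic topology, and that $\bigoplus_{m\ge0}\mathfrak a_m/\mathfrak a_{m+1}$ is a finitely generated $R/\mathfrak a_1$-algebra. Then $\bigoplus_{m\ge0}\mathfrak a_m$ is a finitely generated $R$-algebra. *)

theory Defs
  imports "HOL-Algebra.Algebra" "HOL-Algebra.Ideal_Product"
begin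

definition local_ring_with :: "('a, 'b) ring_scheme \<Rightarrow> 'a set \<Rightarrow> bool" where
  "local_ring_with R m \<longleftrightarrow> cring R \<and> maximalideal m R \<and> (\<forall>J. maximalideal J R \<longrightarrow> J = m)"

definition radical_of :: "('a, 'b) ring_scheme \<Rightarrow> 'a set \<Rightarrow> 'a set" where
  "radical_of R I = {x \<in> carrier R. \<exists>n::nat. x [^]\<^bsub>R\<^esub> n \<in> I}"

definition primary_ideal :: "('a, 'b) ring_scheme \<Rightarrow> 'a set \<Rightarrow> bool" where
  "primary_ideal R q \<longleftrightarrow> ideal q R \<and> q \<noteq> carrier R \<and>
     (\<forall>x\<in>carrier R. \<forall>y\<in>carrier R. x \<otimes>\<^bsub>R\<^esub> y \<in> q \<longrightarrow> x \<in> q \<or> y \<in> radical_of R q)"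

definition m_primary :: "('a, 'b) ring_scheme \<Rightarrow> 'a set \<Rightarrow> 'a set \<Rightarrow> bool" where
  "m_primary R m q \<longleftrightarrow> primary_ideal R q \<and> radical_of R q = m"

fun ideal_pow :: "('a, 'b) ring_scheme \<Rightarrow> 'a set \<Rightarrow> nat \<Rightarrow> 'a set" where
  "ideal_pow R I 0 = carrier R"
| "ideal_pow R I (Suc n) = ideal_prod R I (ideal_pow R I n)"

definition graded_seq_m_primary :: "('a, 'b) ring_scheme \<Rightarrow> 'a set \<Rightarrow> (nat \<Rightarrow> 'a set) \<Rightarrow> bool" where
  "graded_seq_m_primary R m a \<longleftrightarrow> a 0 = carrier R \<and> (\<forall>k\<ge>1. m_primary R m (a k)) \<and>
     (\<forall>k. a (Suc k) \<subseteq> a k) \<and> (\<forall>k l. ideal_prod R (a k) (a l) \<subseteq> a (k + l))"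

definition same_topology :: "('a, 'b) ring_scheme \<Rightarrow> 'a set \<Rightarrow> (nat \<Rightarrow> 'a set) \<Rightarrow> bool" where
  "same_topology R m a \<longleftrightarrow> (\<forall>n. \<exists>k. a k \<subseteq> ideal_pow R m n) \<and> (\<forall>k. \<exists>n. ideal_pow R m n \<subseteq> a k)"

text \<open>The Rees algebra (direct sum of the a_k), realised inside R[t] as the
  polynomials whose k-th coefficient lies in a_k.\<close>
definition rees_carrier :: "('a, 'b) ring_scheme \<Rightarrow> (nat \<Rightarrow> 'a set) \<Rightarrow> (nat \<Rightarrow> 'a) set" where
  "rees_carrier R a = {p \<in> carrier (UP R). \<forall>k. coeff (UP R) p k \<in> a k}"

definition rees_ring :: "('a, 'b) ring_scheme \<Rightarrow> (nat \<Rightarrow> 'a set) \<Rightarrow> ('a, nat \<Rightarrow> 'a) up_ring" where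
  "rees_ring R a = (UP R)\<lparr>carrier := rees_carrier R a\<rparr>"

definition rees_shift_ideal :: "('a, 'b) ring_scheme \<Rightarrow> (nat \<Rightarrow> 'a set) \<Rightarrow> (nat \<Rightarrow> 'a) set" where
  "rees_shift_ideal R a = {p \<in> carrier (UP R). \<forall>k. coeff (UP R) p k \<in> a (Suc k)}"

text \<open>Associated graded ring: direct sum of a_k / a_(k+1).\<close>
definition assoc_graded :: "('a, 'b) ring_scheme \<Rightarrow> (nat \<Rightarrow> 'a set) \<Rightarrow> (nat \<Rightarrow> 'a) set ring" where
  "assoc_graded R a = rees_ring R a Quot rees_shift_ideal R a"

text \<open>Structure maps of R into the Rees algebra and into the associated graded ring
  (via constants in degree 0).  The latter factors through R/a_1.\<close>
definition rees_const :: "('a, 'b) ring_scheme \<Rightarrow> 'a \<Rightarrow> (nat \<Rightarrow> 'a)" where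
  "rees_const R r = monom (UP R) r 0"

definition gr_const :: "('a, 'b) ring_scheme \<Rightarrow> (nat \<Rightarrow> 'a set) \<Rightarrow> 'a \<Rightarrow> (nat \<Rightarrow> 'a) set" where
  "gr_const R a r = rees_shift_ideal R a +>\<^bsub>rees_ring R a\<^esub> rees_const R r"

definition fin_gen_algebra :: "('a, 'b) ring_scheme \<Rightarrow> ('c, 'd) ring_scheme \<Rightarrow> ('a \<Rightarrow> 'c) \<Rightarrow> bool" where
  "fin_gen_algebra R S f \<longleftrightarrow>
     (\<exists>G. finite G \<and> G \<subseteq> carrier S \<and> generate_ring S (f ` carrier R \<union> G) = carrier S)"

end

theory Submission imports Defs begin

lemma (in cring) ideal_simpleI:
  assumes "T \<subseteq> carrier R" "\<zero> \<in> T" "\<And>x y. x \<in> T \<Longrightarrow> y \<in> T \<Longrightarrow> x \<oplus> y \<in> T"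
    "\<And>x. x \<in> T \<Longrightarrow> \<ominus> x \<in> T" "\<And>r x. r \<in> carrier R \<Longrightarrow> x \<in> T \<Longrightarrow> r \<otimes> x \<in> T"
  shows "ideal T R"
proof (rule idealI[OF ring_axioms])
  show "subgroup T (add_monoid R)"
    using add.subgroupI[OF assms(1) _ assms(4) assms(3)] assms(2) by auto
  show "\<And>a x. a \<in> T \<Longrightarrow> x \<in> carrier R \<Longrightarrow> x \<otimes> a \<in> T" using assms(5) .
  show "\<And>a x. a \<in> T \<Longrightarrow> x \<in> carrier R \<Longrightarrow> a \<otimes> x \<in> T"
    using assms(1,5) m_comm by (metis subsetD)
qed

lemma (in ring) finsum_in_ideal:
  assumes "ideal I R" "finite A" "\<And>i. i \<in> A \<Longrightarrow> f i \<in> I"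
  shows "finsum R f A \<in> I"
  using assms(2,3)
proof (induction A rule: finite_induct)
  case empty then show ?case using assms(1) by (simp add: additive_subgroup.zero_closed ideal.axioms(1))
next
  case (insert x F)
  have "f \<in> F \<rightarrow> carrier R" "f x \<in> carrier R" using insert ideal.Icarr[OF assms(1)] by auto
  then show ?case using insert by (simp add: additive_subgroup.a_closed[OF ideal.axioms(1)[OF assms(1)]])
qed


lemma (in ring) set_add_mem: "x \<in> set_add R A B \<longleftrightarrow> (\<exists>u\<in>A. \<exists>v\<in>B. x = u \<oplus> v)"
  unfolding set_add_def' by blast

lemma (in cring) nakayama:
  assumes M: "ideal M R" "\<one> \<notin> M" and units: "\<And>y. y \<in> carrier R \<Longrightarrow> y \<notin> M \<Longrightarrow> y \<in> Units R"
  and J: "ideal J R"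
  and fin: "finite A"
  shows "A \<subseteq> carrier R \<Longrightarrow> (\<forall>x\<in>A. x \<in> set_add R J (ideal_prod R M (Idl A))) \<Longrightarrow> A \<subseteq> J"
  using fin
proof (induction A rule: finite_induct)
  case empty then show ?case by simp
next
  case (insert x B)
  interpret M: ideal M R by fact
  interpret J: ideal J R by fact
  have xc: "x \<in> carrier R" and Bc: "B \<subseteq> carrier R" using insert by auto
  let ?I = "Idl (insert x B)" and ?IB = "Idl B"
  have IB: "ideal ?IB R" using Bc by (rule genideal_ideal)
  have Px: "ideal (PIdl x) R" using xc by (rule cgenideal_ideal)
  have MIB: "ideal (ideal_prod R M ?IB) R" using ideal_prod_is_ideal[OF M(1) IB] .
  have F1: "?I \<subseteq> set_add R (PIdl x) ?IB"
  proof (rule genideal_minimal[OF add_ideals[OF Px IB]])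
    have "x \<in> set_add R (PIdl x) ?IB" unfolding set_add_mem
      using xc cgenideal_self[OF xc] additive_subgroup.zero_closed[OF ideal.axioms(1)[OF IB]]
      by (intro bexI[of _ x] bexI[of _ \<zero>]) auto
    moreover have "b \<in> set_add R (PIdl x) ?IB" if "b \<in> B" for b unfolding set_add_mem
      using that Bc genideal_self[OF Bc] additive_subgroup.zero_closed[OF ideal.axioms(1)[OF Px]]
      by (intro bexI[of _ \<zero>] bexI[of _ b]) auto
    ultimately show "insert x B \<subseteq> set_add R (PIdl x) ?IB" by blast
  qed
  have F2: "s \<in> ideal_prod R M ?I \<Longrightarrow> \<exists>\<mu>\<in>M. \<exists>z\<in>ideal_prod R M ?IB. s = \<mu> \<otimes> x \<oplus> z" for s
  proof (induction s rule: ideal_prod.induct)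
    case (prod i j)
    have "j \<in> set_add R (PIdl x) ?IB" using F1 prod(2) by blast
    then obtain p b where pb: "p \<in> PIdl x" "b \<in> ?IB" "j = p \<oplus> b"
      unfolding set_add_mem by blast
    from pb(1) obtain r where "r \<in> carrier R" "p = r \<otimes> x" unfolding cgenideal_def by blast
    then have rb: "r \<in> carrier R" "b \<in> ?IB" "j = r \<otimes> x \<oplus> b" using pb by auto
    have ic: "i \<in> carrier R" using prod M.Icarr by blast
    have bc: "b \<in> carrier R" using rb(2) ideal.Icarr[OF IB] by blast
    have "i \<otimes> j = (i \<otimes> r) \<otimes> x \<oplus> i \<otimes> b" using rb ic bc xc by algebra
    moreover have "i \<otimes> r \<in> M" using prod(1) rb(1) M.I_r_closed by blast
    moreover have "i \<otimes> b \<in> ideal_prod R M ?IB" using prod(1) rb(2) by (rule ideal_prod.prod)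
    ultimately show ?case by metis
  next
    case (sum s1 s2)
    then obtain \<mu>1 z1 \<mu>2 z2 where h: "\<mu>1 \<in> M" "z1 \<in> ideal_prod R M ?IB" "s1 = \<mu>1 \<otimes> x \<oplus> z1"
      "\<mu>2 \<in> M" "z2 \<in> ideal_prod R M ?IB" "s2 = \<mu>2 \<otimes> x \<oplus> z2" by blast
    have c: "\<mu>1 \<in> carrier R" "\<mu>2 \<in> carrier R" "z1 \<in> carrier R" "z2 \<in> carrier R"
      using M.Icarr[OF h(1)] M.Icarr[OF h(4)] ideal.Icarr[OF MIB h(2)] ideal.Icarr[OF MIB h(5)] by auto
    have "s1 \<oplus> s2 = (\<mu>1 \<oplus> \<mu>2) \<otimes> x \<oplus> (z1 \<oplus> z2)" using h c xc by algebra
    moreover have "\<mu>1 \<oplus> \<mu>2 \<in> M" using h M.a_closed by blast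
    moreover have "z1 \<oplus> z2 \<in> ideal_prod R M ?IB" using h(2,5) by (rule ideal_prod.sum)
    ultimately show ?case by blast
  qed
  let ?J' = "set_add R J (ideal_prod R M ?IB)"
  have J': "ideal ?J' R" using add_ideals[OF J MIB] .
  have z0: "\<zero> \<in> ideal_prod R M ?IB"
    using additive_subgroup.zero_closed[OF ideal.axioms(1)[OF MIB]] .
  have JJ': "J \<subseteq> ?J'"
  proof
    fix y assume y: "y \<in> J"
    then have "y = y \<oplus> \<zero>" using J.Icarr[OF y] by simp
    then show "y \<in> ?J'" unfolding set_add_mem using y z0 by blast
  qed
  have MJ': "ideal_prod R M ?IB \<subseteq> ?J'"
  proof
    fix y assume y: "y \<in> ideal_prod R M ?IB"
    then have "y = \<zero> \<oplus> y" using ideal.Icarr[OF MIB y] by simp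
    then show "y \<in> ?J'" unfolding set_add_mem using y J.zero_closed by blast
  qed
  have hyp: "y \<in> insert x B \<Longrightarrow> \<exists>j\<in>J. \<exists>\<mu>\<in>M. \<exists>z\<in>ideal_prod R M ?IB. y = j \<oplus> (\<mu> \<otimes> x \<oplus> z)" for y
  proof -
    assume "y \<in> insert x B"
    then have "y \<in> set_add R J (ideal_prod R M ?I)" using insert.prems(2) by blast
    then obtain j w where jw: "j \<in> J" "w \<in> ideal_prod R M ?I" "y = j \<oplus> w" unfolding set_add_mem by blast
    from F2[OF jw(2)] obtain \<mu> z where "\<mu> \<in> M" "z \<in> ideal_prod R M ?IB" "w = \<mu> \<otimes> x \<oplus> z" by blast
    then show ?thesis using jw by blast
  qed
  have x': "x \<in> ?J'"
  proof -
    obtain j \<mu> z where h: "j \<in> J" "\<mu> \<in> M" "z \<in> ideal_prod R M ?IB" "x = j \<oplus> (\<mu> \<otimes> x \<oplus> z)"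
      using hyp[of x] by blast
    have c: "j \<in> carrier R" "\<mu> \<in> carrier R" "z \<in> carrier R"
      using h J.Icarr M.Icarr ideal.Icarr[OF MIB] by blast+
    let ?u = "\<one> \<ominus> \<mu>"
    have uc: "?u \<in> carrier R" using c by simp
    have "?u \<notin> M"
    proof
      assume "?u \<in> M"
      then have "?u \<oplus> \<mu> \<in> M" using h(2) M.a_closed by blast
      moreover have "?u \<oplus> \<mu> = \<one>" using c by algebra
      ultimately show False using M(2) by simp
    qed
    then have uu: "?u \<in> Units R" using units uc by blast
    have ux: "?u \<otimes> x = j \<oplus> z" using h(4) c xc
    proof -
      have "?u \<otimes> x = x \<ominus> \<mu> \<otimes> x" using c xc by algebra
      also have "\<dots> = j \<oplus> z" by (subst h(4)) (use c xc in algebra)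
      finally show ?thesis .
    qed
    have "x = inv ?u \<otimes> (?u \<otimes> x)" using uu xc uc by (simp add: m_assoc[symmetric] Units_l_inv)
    also have "\<dots> = inv ?u \<otimes> (j \<oplus> z)" using ux by simp
    finally have "x = inv ?u \<otimes> (j \<oplus> z)" .
    moreover have "j \<oplus> z \<in> ?J'" unfolding set_add_mem using h by blast
    ultimately show ?thesis using ideal.I_l_closed[OF J'] Units_inv_closed[OF uu] by metis
  qed
  have "\<forall>y\<in>B. y \<in> ?J'"
  proof
    fix y assume y: "y \<in> B"
    obtain j \<mu> z where h: "j \<in> J" "\<mu> \<in> M" "z \<in> ideal_prod R M ?IB" "y = j \<oplus> (\<mu> \<otimes> x \<oplus> z)"
      using hyp[of y] y by blast
    have "\<mu> \<otimes> x \<in> ?J'" using ideal.I_l_closed[OF J' x'] h(2) M.Icarr by blast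
    moreover have "j \<in> ?J'" "z \<in> ?J'" using h JJ' MJ' by auto
    ultimately show "y \<in> ?J'" using h(4) additive_subgroup.a_closed[OF ideal.axioms(1)[OF J']] by metis
  qed
  then have BJ: "B \<subseteq> J" using insert.IH Bc by blast
  then have "?IB \<subseteq> J" using genideal_minimal[OF J] by blast
  then have "ideal_prod R M ?IB \<subseteq> J" using ideal_prod_inter[OF M(1) IB] by blast
  then have "?J' \<subseteq> J" using J.a_closed by (force simp: set_add_mem)
  then show ?case using x' BJ by blast
qed


lemma (in noetherian_ring) local_units:
  assumes cr: "cring R" and mx: "\<And>J. maximalideal J R \<Longrightarrow> J = m"
    and y: "y \<in> carrier R" "y \<notin> m"
  shows "y \<in> Units R"
proof -
  interpret cring R by (rule cr)
  let ?I = "PIdl y"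
  have I: "ideal ?I R" using cgenideal_ideal[OF y(1)] .
  show ?thesis
  proof (cases "\<one> \<in> ?I")
    case True
    then obtain r where r: "r \<in> carrier R" "\<one> = r \<otimes> y" unfolding cgenideal_def by blast
    then show ?thesis unfolding Units_def using y(1) m_comm by auto
  next
    case False
    define S where "S = {J. ideal J R \<and> ?I \<subseteq> J \<and> \<one> \<notin> J}"
    have "\<exists>M\<in>S. \<forall>Z\<in>S. M \<subseteq> Z \<longrightarrow> Z = M"
    proof (rule subset_Zorn)
      fix C assume C: "subset.chain S C"
      show "\<exists>U\<in>S. \<forall>Z\<in>C. Z \<subseteq> U"
      proof (cases "C = {}")
        case True
        have "?I \<in> S" using I False unfolding S_def by auto
        then show ?thesis using True by auto
      next
        case False
        have "subset.chain {I. ideal I R} C"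
          using C unfolding pred_on.chain_def S_def by auto
        then have "\<Union>C \<in> C" using ideal_chain_is_trivial False by simp
        then show ?thesis by (meson C Union_upper pred_on.chain_def subsetCE)
      qed
    qed
    then obtain M where M: "M \<in> S" "\<And>Z. Z \<in> S \<Longrightarrow> M \<subseteq> Z \<Longrightarrow> Z = M" by blast
    have "maximalideal M R"
    proof (rule maximalidealI)
      show "ideal M R" using M(1) unfolding S_def by auto
      show "carrier R \<noteq> M" using M(1) unfolding S_def by auto
      show "J = M \<or> J = carrier R" if "ideal J R" "M \<subseteq> J" "J \<subseteq> carrier R" for J
      proof (cases "\<one> \<in> J")
        case True then show ?thesis using ideal.one_imp_carrier[OF that(1)] by auto
      next
        case False
        then have "J \<in> S" using that M(1) unfolding S_def by auto
        then show ?thesis using M(2) that(2) by auto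
      qed
    qed
    then have "M = m" by (rule mx)
    moreover have "y \<in> M" using M(1) cgenideal_self[OF y(1)] unfolding S_def by auto
    ultimately show ?thesis using y(2) by simp
  qed
qed

locale rees_setup = cring R for R (structure) +
  fixes a :: "nat \<Rightarrow> 'a set"
  assumes a0: "a 0 = carrier R"
    and a_ideal: "ideal (a k) R"
    and a_mono: "a (Suc k) \<subseteq> a k"
    and a_mult: "x \<in> a k \<Longrightarrow> y \<in> a l \<Longrightarrow> x \<otimes> y \<in> a (k + l)"
begin

sublocale P: UP_cring R "UP R" by (rule UP_cring.intro) (rule is_cring)

lemma a_antimono: "k \<le> l \<Longrightarrow> a l \<subseteq> a k"
  by (induction l rule: dec_induct) (use a_mono in auto)

lemma a_carr: "x \<in> a k \<Longrightarrow> x \<in> carrier R"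
  using ideal.Icarr[OF a_ideal] by blast


abbreviation "cf \<equiv> up_ring.coeff (UP R)"
abbreviation "mn \<equiv> up_ring.monom (UP R)"
abbreviation "RC \<equiv> rees_carrier R a"
abbreviation "SH \<equiv> rees_shift_ideal R a"
abbreviation "RR \<equiv> rees_ring R a"

lemma coeff_mult_in:
  assumes "p \<in> carrier (UP R)" "q \<in> carrier (UP R)" "\<And>i. cf p i \<in> a i"
    "\<And>i. cf q i \<in> a (i + s)"
  shows "cf (p \<otimes>\<^bsub>UP R\<^esub> q) n \<in> a (n + s)"
proof -
  have "(\<Oplus>i \<in> {..n}. cf p i \<otimes> cf q (n-i)) \<in> a (n + s)"
  proof (rule finsum_in_ideal[OF a_ideal], simp)
    fix i assume "i \<in> {..n}"
    then have "i + (n - i + s) = n + s" by auto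
    then show "cf p i \<otimes> cf q (n - i) \<in> a (n + s)"
      using a_mult[OF assms(3)[of i] assms(4)[of "n-i"]] by simp
  qed
  then show ?thesis using assms(1,2) by simp
qed

lemma RC_sub: "RC \<subseteq> carrier (UP R)" unfolding rees_carrier_def by auto

lemma RC_subring: "subring RC (UP R)"
proof (rule P.subringI)
  show "RC \<subseteq> carrier (UP R)" by (rule RC_sub)
  show "\<one>\<^bsub>UP R\<^esub> \<in> RC" unfolding rees_carrier_def
    using a0 additive_subgroup.zero_closed[OF ideal.axioms(1)[OF a_ideal]] by auto
  show "\<ominus>\<^bsub>UP R\<^esub> h \<in> RC" if "h \<in> RC" for h
    using that unfolding rees_carrier_def
    by (auto intro: additive_subgroup.a_inv_closed[OF ideal.axioms(1)[OF a_ideal]])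
  show "h1 \<oplus>\<^bsub>UP R\<^esub> h2 \<in> RC" if "h1 \<in> RC" "h2 \<in> RC" for h1 h2
    using that unfolding rees_carrier_def
    by (auto intro: additive_subgroup.a_closed[OF ideal.axioms(1)[OF a_ideal]])
  show "h1 \<otimes>\<^bsub>UP R\<^esub> h2 \<in> RC" if "h1 \<in> RC" "h2 \<in> RC" for h1 h2
    using that coeff_mult_in[of h1 h2 0] unfolding rees_carrier_def by auto
qed

lemma RR_ring: "ring RR"
  unfolding rees_ring_def by (rule P.subring_is_ring[OF RC_subring])

lemma RR_simps [simp]: "carrier RR = RC" "monoid.mult RR = monoid.mult (UP R)" "ring.add RR = ring.add (UP R)"
  "monoid.one RR = monoid.one (UP R)" "ring.zero RR = ring.zero (UP R)"
  unfolding rees_ring_def by simp_all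

lemma RR_a_inv: "x \<in> RC \<Longrightarrow> \<ominus>\<^bsub>RR\<^esub> x = \<ominus>\<^bsub>UP R\<^esub> x"
proof -
  assume x: "x \<in> RC"
  interpret RR: ring RR by (rule RR_ring)
  have "\<ominus>\<^bsub>UP R\<^esub> x \<in> RC" using subringE(5)[OF RC_subring x] .
  moreover have "(\<ominus>\<^bsub>UP R\<^esub> x) \<oplus>\<^bsub>UP R\<^esub> x = \<zero>\<^bsub>UP R\<^esub>"
    using x RC_sub by (intro P.l_neg) auto
  ultimately show ?thesis using x
    by (intro RR.minus_equality) (auto simp: rees_ring_def)
qed


lemma SH_ideal: "ideal SH RR"
proof (rule idealI[OF RR_ring])
  interpret RR: ring RR by (rule RR_ring)
  have SHRC: "SH \<subseteq> RC" unfolding rees_shift_ideal_def rees_carrier_def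
    using a_mono by blast
  show "subgroup SH (add_monoid RR)"
  proof (rule RR.add.subgroupI)
    show "SH \<subseteq> carrier RR" using SHRC by simp
    have "\<zero>\<^bsub>UP R\<^esub> \<in> SH" unfolding rees_shift_ideal_def
      using additive_subgroup.zero_closed[OF ideal.axioms(1)[OF a_ideal]] by simp
    then show "SH \<noteq> {}" by blast
    show "\<ominus>\<^bsub>RR\<^esub> x \<in> SH" if "x \<in> SH" for x
    proof -
      have "\<ominus>\<^bsub>RR\<^esub> x = \<ominus>\<^bsub>UP R\<^esub> x" using that SHRC by (intro RR_a_inv) auto
      then show ?thesis using that unfolding rees_shift_ideal_def
        by (auto simp: P.coeff_a_inv intro: additive_subgroup.a_inv_closed[OF ideal.axioms(1)[OF a_ideal]])
    qed
    show "x \<oplus>\<^bsub>RR\<^esub> y \<in> SH" if "x \<in> SH" "y \<in> SH" for x y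
      using that unfolding rees_shift_ideal_def
      by (auto intro: additive_subgroup.a_closed[OF ideal.axioms(1)[OF a_ideal]])
  qed
  show "x \<otimes>\<^bsub>RR\<^esub> s \<in> SH" if "s \<in> SH" "x \<in> carrier RR" for s x
  proof -
    have x: "x \<in> carrier (UP R)" "\<And>i. cf x i \<in> a i" using that(2) by (auto simp: rees_carrier_def)
    have s: "s \<in> carrier (UP R)" "\<And>i. cf s i \<in> a (i + 1)" using that(1) unfolding rees_shift_ideal_def by auto
    show ?thesis using coeff_mult_in[OF x(1) s(1) x(2) s(2)] x(1) s(1) unfolding rees_shift_ideal_def by auto
  qed
  show "s \<otimes>\<^bsub>RR\<^esub> x \<in> SH" if "s \<in> SH" "x \<in> carrier RR" for s x
  proof -
    have x: "x \<in> carrier (UP R)" "\<And>i. cf x i \<in> a i" using that(2) by (auto simp: rees_carrier_def)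
    have s: "s \<in> carrier (UP R)" "\<And>i. cf s i \<in> a (i + 1)" using that(1) unfolding rees_shift_ideal_def by auto
    show ?thesis using coeff_mult_in[OF x(1) s(1) x(2) s(2)] x(1) s(1) P.m_comm[OF x(1) s(1)] unfolding rees_shift_ideal_def by auto
  qed
qed

end

locale rees_F = rees_setup +
  fixes F :: "(nat \<times> 'a) set"
  assumes F_fin: "finite F" and F_in: "(d, f) \<in> F \<Longrightarrow> 1 \<le> d \<and> f \<in> a d"
begin

definition gens :: "nat \<Rightarrow> 'a set" where
  "gens n = {f \<otimes> b | d f b. (d, f) \<in> F \<and> d \<le> n \<and> b \<in> a (n - d)}"
definition J :: "nat \<Rightarrow> 'a set" where "J n = Idl (gens n)"
definition K :: "nat \<Rightarrow> 'a set" where "K n = Idl (gens n \<union> a (Suc n))"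

lemma gens_a: "gens n \<subseteq> a n"
proof
  fix x assume "x \<in> gens n"
  then obtain d f b where "(d, f) \<in> F" "d \<le> n" "b \<in> a (n - d)" "x = f \<otimes> b"
    unfolding gens_def by blast
  then show "x \<in> a n" using a_mult[of f d b "n - d"] F_in by auto
qed

lemma gens_carr: "gens n \<subseteq> carrier R" using gens_a a_carr by blast

lemma J_ideal: "ideal (J n) R" unfolding J_def using gens_carr by (rule genideal_ideal)
lemma K_ideal: "ideal (K n) R" unfolding K_def using gens_carr a_carr by (intro genideal_ideal) blast
lemma gens_J: "gens n \<subseteq> J n" unfolding J_def using gens_carr by (rule genideal_self)
lemma gens_K: "gens n \<subseteq> K n" unfolding K_def using gens_carr a_carr genideal_self[of "gens n \<union> a (Suc n)"] by blast
lemma a_K: "a (Suc n) \<subseteq> K n" unfolding K_def using gens_carr a_carr genideal_self[of "gens n \<union> a (Suc n)"] by blast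
lemma J_a: "J n \<subseteq> a n" unfolding J_def using gens_a a_ideal by (intro genideal_minimal)

lemma K_sub: "K n \<subseteq> set_add R (J n) (a (Suc n))"
  unfolding K_def
proof (rule genideal_minimal[OF add_ideals[OF J_ideal a_ideal]])
  have z1: "\<zero> \<in> J n" "\<zero> \<in> a (Suc n)"
    using J_ideal a_ideal by (auto intro: additive_subgroup.zero_closed ideal.axioms(1))
  have "x \<in> set_add R (J n) (a (Suc n))" if "x \<in> gens n" for x
  proof -
    have "x = x \<oplus> \<zero>" using that gens_carr by (metis subsetD r_zero)
    then show ?thesis using that gens_J z1 unfolding set_add_def' by blast
  qed
  moreover have "x \<in> set_add R (J n) (a (Suc n))" if "x \<in> a (Suc n)" for x
  proof -
    have "x = \<zero> \<oplus> x" using that a_carr by (metis l_zero)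
    then show ?thesis using that z1 unfolding set_add_def' by blast
  qed
  ultimately show "gens n \<union> a (Suc n) \<subseteq> set_add R (J n) (a (Suc n))" by blast
qed

lemma colon_ideal:
  assumes "ideal I R" "y \<in> carrier R"
  shows "ideal {x \<in> carrier R. x \<otimes> y \<in> I} R"
proof (rule ideal_simpleI)
  interpret I: ideal I R by fact
  show "{x \<in> carrier R. x \<otimes> y \<in> I} \<subseteq> carrier R" by auto
  show "\<zero> \<in> {x \<in> carrier R. x \<otimes> y \<in> I}" using assms(2) by simp
  show "x \<oplus> z \<in> {x \<in> carrier R. x \<otimes> y \<in> I}" if "x \<in> {x \<in> carrier R. x \<otimes> y \<in> I}" "z \<in> {x \<in> carrier R. x \<otimes> y \<in> I}" for x z
    using that assms(2) by (auto simp: l_distr)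
  show "\<ominus> x \<in> {x \<in> carrier R. x \<otimes> y \<in> I}" if "x \<in> {x \<in> carrier R. x \<otimes> y \<in> I}" for x
    using that assms(2) by (auto simp: l_minus)
  show "r \<otimes> x \<in> {x \<in> carrier R. x \<otimes> y \<in> I}" if "r \<in> carrier R" "x \<in> {x \<in> carrier R. x \<otimes> y \<in> I}" for r x
    using that assms(2) by (auto simp: m_assoc I.I_l_closed)
qed

lemma K_mult:
  assumes "x \<in> K i" "y \<in> a l"
  shows "x \<otimes> y \<in> K (i + l)"
proof -
  have y: "y \<in> carrier R" using assms(2) a_carr by blast
  have "K i \<subseteq> {x \<in> carrier R. x \<otimes> y \<in> K (i + l)}"
    unfolding K_def[of i]
  proof (rule genideal_minimal[OF colon_ideal[OF K_ideal y]])
    show "gens i \<union> a (Suc i) \<subseteq> {x \<in> carrier R. x \<otimes> y \<in> K (i + l)}"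
    proof
      fix x assume "x \<in> gens i \<union> a (Suc i)"
      then show "x \<in> {x \<in> carrier R. x \<otimes> y \<in> K (i + l)}"
      proof
        assume "x \<in> gens i"
        then obtain d f b where dfb: "(d, f) \<in> F" "d \<le> i" "b \<in> a (i - d)" "x = f \<otimes> b"
          unfolding gens_def by blast
        have f: "f \<in> carrier R" using F_in dfb(1) a_carr by blast
        have b: "b \<in> carrier R" using dfb(3) a_carr by blast
        have "b \<otimes> y \<in> a (i + l - d)" using a_mult[OF dfb(3) assms(2)] dfb(2)
          by (simp add: add.commute)
        then have "f \<otimes> (b \<otimes> y) \<in> gens (i + l)" unfolding gens_def using dfb by fastforce
        then show ?thesis using gens_K dfb f b y by (auto simp: m_assoc)
      next
        assume "x \<in> a (Suc i)"
        then have "x \<otimes> y \<in> a (Suc (i + l))" using a_mult[OF _ assms(2)] by fastforce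
        then show ?thesis using a_K \<open>x \<in> a (Suc i)\<close> a_carr by blast
      qed
    qed
  qed
  then show ?thesis using assms(1) by blast
qed

definition Q where "Q = {p \<in> RC. \<forall>n\<ge>1. cf p n \<in> K n}"

lemma Q_subring: "subring Q RR"
proof -
  interpret RR: ring RR by (rule RR_ring)
  have z: "\<zero> \<in> K n" for n using K_ideal by (auto intro: additive_subgroup.zero_closed ideal.axioms(1))
  show ?thesis
  proof (rule RR.subringI)
    show "Q \<subseteq> carrier RR" unfolding Q_def by auto
    show "\<one>\<^bsub>RR\<^esub> \<in> Q" unfolding Q_def using subringE(3)[OF RC_subring] z by auto
    show "\<ominus>\<^bsub>RR\<^esub> h \<in> Q" if "h \<in> Q" for h
      using that RC_sub[THEN subsetD, of h] RR_a_inv[of h] subringE(5)[OF RC_subring, of h] RC_sub P.coeff_a_inv[of h]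
      unfolding Q_def
      by (auto intro: additive_subgroup.a_inv_closed[OF ideal.axioms(1)[OF K_ideal]])
    show "h1 \<oplus>\<^bsub>RR\<^esub> h2 \<in> Q" if "h1 \<in> Q" "h2 \<in> Q" for h1 h2
      using that RC_sub[THEN subsetD, of h1] RC_sub[THEN subsetD, of h2] subringE(7)[OF RC_subring, of h1 h2] RC_sub
      unfolding Q_def
      by (auto intro: additive_subgroup.a_closed[OF ideal.axioms(1)[OF K_ideal]])
    show "h1 \<otimes>\<^bsub>RR\<^esub> h2 \<in> Q" if "h1 \<in> Q" "h2 \<in> Q" for h1 h2
    proof -
      have h: "h1 \<in> RC" "h2 \<in> RC" using that unfolding Q_def by auto
      have hc: "h1 \<in> carrier (UP R)" "h2 \<in> carrier (UP R)" using h RC_sub by auto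
      have "cf (h1 \<otimes>\<^bsub>UP R\<^esub> h2) n \<in> K n" if n: "n \<ge> 1" for n
      proof -
        have "(\<Oplus>i \<in> {..n}. cf h1 i \<otimes> cf h2 (n-i)) \<in> K n"
        proof (rule finsum_in_ideal[OF K_ideal], simp)
          fix i assume i: "i \<in> {..n}"
          have c1: "cf h1 i \<in> a i" "cf h2 (n - i) \<in> a (n - i)"
            using h unfolding rees_carrier_def by auto
          show "cf h1 i \<otimes> cf h2 (n - i) \<in> K n"
          proof (cases "i = 0")
            case True
            then have "cf h2 (n - i) \<in> K n" using \<open>h2 \<in> Q\<close> n unfolding Q_def by auto
            then show ?thesis using True c1 a0 ideal.I_l_closed[OF K_ideal] by auto
          next
            case False
            then have "cf h1 i \<in> K i" using \<open>h1 \<in> Q\<close> unfolding Q_def by auto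
            from K_mult[OF this c1(2)] show ?thesis using i by simp
          qed
        qed
        then show ?thesis using hc by simp
      qed
      then show ?thesis using subringE(6)[OF RC_subring h] unfolding Q_def by simp
    qed
  qed
qed


lemma mn_RC: "c \<in> a n \<Longrightarrow> mn c n \<in> RC"
  unfolding rees_carrier_def using a_carr[of c n]
  by (auto simp: P.coeff_monom intro: additive_subgroup.zero_closed[OF ideal.axioms(1)[OF a_ideal]])

lemma gr_lemma:
  assumes gen: "generate_ring (assoc_graded R a)
      ((\<lambda>c. gr_const R a (SOME r. r \<in> c)) ` carrier (R Quot (a 1)) \<union> G) = carrier (assoc_graded R a)"
  and GQ: "G \<subseteq> (\<lambda>p. SH +>\<^bsub>RR\<^esub> p) ` Q"
  and n: "1 \<le> n" and c: "c \<in> a n"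
  shows "c \<in> K n"
proof -
  interpret RR: ring RR by (rule RR_ring)
  interpret SHI: ideal SH RR by (rule SH_ideal)
  interpret A1: ideal "a 1" R by (rule a_ideal)
  let ?gr = "RR Quot SH"
  let ?H = "(\<lambda>c. gr_const R a (SOME r. r \<in> c)) ` carrier (R Quot (a 1)) \<union> G"
  have grdef: "assoc_graded R a = ?gr" unfolding assoc_graded_def ..
  interpret GR: ring ?gr by (rule SHI.quotient_is_ring)
  have img: "subring ((\<lambda>p. SH +>\<^bsub>RR\<^esub> p) ` Q) ?gr"
    using ring_hom_ring.img_is_subring[OF SHI.rcos_ring_hom_ring Q_subring] .
  have Hc: "?H \<subseteq> carrier ?gr"
    using gen generate_ring.incl[of _ ?H ?gr] unfolding grdef by blast
  have Himg: "?H \<subseteq> (\<lambda>p. SH +>\<^bsub>RR\<^esub> p) ` Q"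
  proof -
    have "gr_const R a (SOME r. r \<in> x) \<in> (\<lambda>p. SH +>\<^bsub>RR\<^esub> p) ` Q" if x: "x \<in> carrier (R Quot (a 1))" for x
    proof -
      obtain y where y: "y \<in> carrier R" "x = a 1 +> y"
        using x unfolding FactRing_def A_RCOSETS_def' by auto
      have "y \<in> x" using y A1.a_rcos_self by simp
      then have r: "(SOME r. r \<in> x) \<in> x" by (rule someI)
      then have rc: "(SOME r. r \<in> x) \<in> carrier R" using y A1.a_elemrcos_carrier by blast
      have "rees_const R (SOME r. r \<in> x) \<in> Q"
        unfolding Q_def rees_const_def using mn_RC[of _ 0] rc a0
        by (auto simp: P.coeff_monom intro: additive_subgroup.zero_closed[OF ideal.axioms(1)[OF K_ideal]])
      then show ?thesis unfolding gr_const_def by blast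
    qed
    then show ?thesis using GQ by blast
  qed
  have "carrier ?gr \<subseteq> (\<lambda>p. SH +>\<^bsub>RR\<^esub> p) ` Q"
    using GR.generate_ring_min_subring1[OF Hc img Himg] gen unfolding grdef by simp
  moreover have mc: "mn c n \<in> RC" using mn_RC[OF c] .
  moreover have "SH +>\<^bsub>RR\<^esub> mn c n \<in> carrier ?gr"
    unfolding FactRing_def using RR.a_rcosetsI[OF SHI.a_subset] mc by simp
  ultimately obtain q where q: "q \<in> Q" "SH +>\<^bsub>RR\<^esub> mn c n = SH +>\<^bsub>RR\<^esub> q" by auto
  have qc: "q \<in> RC" using q(1) unfolding Q_def by auto
  have "mn c n \<in> SH +>\<^bsub>RR\<^esub> q" using SHI.a_repr_independenceD[of "mn c n" q] q(2) mc by simp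
  then have "mn c n \<oplus>\<^bsub>RR\<^esub> \<ominus>\<^bsub>RR\<^esub> q \<in> SH" using SHI.a_rcos_module_imp qc by simp
  then have "mn c n \<oplus>\<^bsub>UP R\<^esub> \<ominus>\<^bsub>UP R\<^esub> q \<in> SH" using RR_a_inv[OF qc] by simp
  then have "cf (mn c n \<oplus>\<^bsub>UP R\<^esub> \<ominus>\<^bsub>UP R\<^esub> q) n \<in> a (Suc n)" unfolding rees_shift_ideal_def by auto
  moreover have qcu: "q \<in> carrier (UP R)" using qc RC_sub by auto
  moreover have cc: "c \<in> carrier R" using c a_carr by auto
  ultimately have d: "c \<oplus> \<ominus> cf q n \<in> K n" using a_K by (auto simp: P.coeff_monom P.coeff_a_inv)
  have qn: "cf q n \<in> K n" using q(1) n unfolding Q_def by auto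
  have qnc: "cf q n \<in> carrier R" using qcu by simp
  have "c = (c \<oplus> \<ominus> cf q n) \<oplus> cf q n" using cc qnc by algebra
  then show ?thesis using additive_subgroup.a_closed[OF ideal.axioms(1)[OF K_ideal] d qn] by simp
qed


definition D :: nat where "D = Max (insert 1 (fst ` F))"

lemma D_fin: "finite (insert 1 (fst ` F))" using F_fin by simp

lemma F_le_D: assumes "(d, f) \<in> F" shows "d \<le> D"
proof -
  have "d \<in> insert 1 (fst ` F)" using assms by (metis fst_conv image_eqI insertI2)
  then show ?thesis unfolding D_def using Max_ge[OF D_fin] by blast
qed

lemma D_ge1: "1 \<le> D"
  unfolding D_def using Max_ge[OF D_fin] by blast

lemma J_Suc: "D \<le> n \<Longrightarrow> J (Suc n) \<subseteq> J n"
  unfolding J_def[of "Suc n"]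
proof (rule genideal_minimal[OF J_ideal])
  assume n: "D \<le> n"
  show "gens (Suc n) \<subseteq> J n"
  proof
    fix x assume "x \<in> gens (Suc n)"
    then obtain d f b where dfb: "(d, f) \<in> F" "d \<le> Suc n" "b \<in> a (Suc n - d)" "x = f \<otimes> b"
      unfolding gens_def by blast
    have "d \<le> n" using F_le_D[OF dfb(1)] n by simp
    then have "Suc n - d = Suc (n - d)" by simp
    then have "b \<in> a (n - d)" using dfb(3) a_mono by auto
    then have "x \<in> gens n" unfolding gens_def using dfb \<open>d \<le> n\<close> by blast
    then show "x \<in> J n" using gens_J by blast
  qed
qed

lemma J_anti: "D \<le> n \<Longrightarrow> J (n + k) \<subseteq> J n"
proof (induction k)
  case 0 then show ?case by simp
next
  case (Suc k)
  have "J (Suc (n + k)) \<subseteq> J (n + k)" using J_Suc Suc.prems by simp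
  then show ?case using Suc by simp
qed

lemma iterate:
  assumes aK: "\<And>n. 1 \<le> n \<Longrightarrow> a n \<subseteq> K n" and n: "D \<le> n"
  shows "a n \<subseteq> set_add R (J n) (a (n + k))"
proof (induction k)
  case 0
  have z: "\<zero> \<in> J n" using additive_subgroup.zero_closed[OF ideal.axioms(1)[OF J_ideal]] .
  show ?case
  proof
    fix x assume x: "x \<in> a n"
    then have "x = \<zero> \<oplus> x" using a_carr[OF x] by simp
    then show "x \<in> set_add R (J n) (a (n + 0))" unfolding set_add_mem
      using x z by auto
  qed
next
  case (Suc k)
  show ?case
  proof
    fix x assume x: "x \<in> a n"
    have "x \<in> set_add R (J n) (a (n + k))" using Suc.IH x by (rule subsetD)
    then obtain j y where jy: "j \<in> J n" "y \<in> a (n + k)" "x = j \<oplus> y"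
      unfolding set_add_mem by blast
    have "1 \<le> n + k" using n D_ge1 by simp
    then have "y \<in> K (n + k)" using aK[of "n + k"] jy(2) by blast
    then have "y \<in> set_add R (J (n + k)) (a (Suc (n + k)))" using K_sub[of "n + k"] by blast
    then obtain j' z where jz: "j' \<in> J (n + k)" "z \<in> a (Suc (n + k))" "y = j' \<oplus> z"
      unfolding set_add_mem by blast
    have j': "j' \<in> J n" using J_anti[OF n] jz(1) by (rule subsetD)
    have c: "j \<in> carrier R" "j' \<in> carrier R" "z \<in> carrier R"
      using ideal.Icarr[OF J_ideal jy(1)] ideal.Icarr[OF J_ideal j'] a_carr[OF jz(2)] by auto
    have "x = (j \<oplus> j') \<oplus> z" using jy(3) jz(3) c by (simp add: a_assoc)
    moreover have "j \<oplus> j' \<in> J n"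
      using additive_subgroup.a_closed[OF ideal.axioms(1)[OF J_ideal] jy(1) j'] .
    moreover have "z \<in> a (n + Suc k)" using jz(2) by simp
    ultimately show "x \<in> set_add R (J n) (a (n + Suc k))" unfolding set_add_mem by blast
  qed
qed

lemma ideal_prod_mono2:
  assumes "I \<subseteq> I'" shows "ideal_prod R M I \<subseteq> ideal_prod R M I'"
proof
  fix s assume "s \<in> ideal_prod R M I"
  then show "s \<in> ideal_prod R M I'"
    by (induction s rule: ideal_prod.induct) (use assms in \<open>auto intro: ideal_prod.intros\<close>)
qed

lemma aJ:
  assumes aK: "\<And>n. 1 \<le> n \<Longrightarrow> a n \<subseteq> K n" and n: "D \<le> n"
    and noeth: "noetherian_ring R"
    and M: "ideal M R" "\<one> \<notin> M" and units: "\<And>y. y \<in> carrier R \<Longrightarrow> y \<notin> M \<Longrightarrow> y \<in> Units R"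
    and top: "same_topology R M a"
  shows "a n \<subseteq> J n"
proof -
  obtain A where A: "A \<subseteq> carrier R" "finite A" "a n = Idl A"
    using noetherian_ring.finetely_gen[OF noeth a_ideal] by blast
  obtain r where r: "ideal_pow R M r \<subseteq> a n" using top unfolding same_topology_def by blast
  obtain N0 where N0: "a N0 \<subseteq> ideal_pow R M (Suc r)" using top unfolding same_topology_def by blast
  define N where "N = max N0 n"
  have "a N \<subseteq> a N0" unfolding N_def by (rule a_antimono) simp
  also have "\<dots> \<subseteq> ideal_prod R M (ideal_pow R M r)" using N0 by simp
  also have "\<dots> \<subseteq> ideal_prod R M (a n)" using ideal_prod_mono2[OF r] .
  finally have aN: "a N \<subseteq> ideal_prod R M (Idl A)" using A(3) by simp
  have "a n \<subseteq> set_add R (J n) (a (n + (N - n)))" using iterate[OF aK n] .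
  moreover have "n + (N - n) = N" unfolding N_def by simp
  ultimately have sub: "a n \<subseteq> set_add R (J n) (a N)" by simp
  have "a n \<subseteq> set_add R (J n) (ideal_prod R M (Idl A))"
  proof
    fix x assume "x \<in> a n"
    then have "x \<in> set_add R (J n) (a N)" using sub by blast
    then obtain j y where jy: "j \<in> J n" "y \<in> a N" "x = j \<oplus> y" unfolding set_add_mem by blast
    have "y \<in> ideal_prod R M (Idl A)" using aN jy(2) by blast
    then show "x \<in> set_add R (J n) (ideal_prod R M (Idl A))" unfolding set_add_mem using jy(1,3) by blast
  qed
  then have "\<forall>x\<in>A. x \<in> set_add R (J n) (ideal_prod R M (Idl A))"
    using A genideal_self by blast
  then have "A \<subseteq> J n" using nakayama[OF M units J_ideal A(2) A(1)] by blast
  then show ?thesis using A(3) genideal_minimal[OF J_ideal] by blast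
qed


lemma generation:
  assumes aJ: "\<And>n. D \<le> n \<Longrightarrow> a n \<subseteq> J n" and noeth: "noetherian_ring R"
  shows "fin_gen_algebra R RR (rees_const R)"
proof -
  interpret RR: ring RR by (rule RR_ring)
  have UPr: "ring (UP R)" by (rule P.UP_ring)
  have "\<forall>k. \<exists>A. A \<subseteq> carrier R \<and> finite A \<and> a k = Idl A"
    using noetherian_ring.finetely_gen[OF noeth a_ideal] by blast
  then obtain B where B: "\<And>k. B k \<subseteq> carrier R" "\<And>k. finite (B k)" "\<And>k. a k = Idl (B k)"
    by metis
  define Gs where "Gs = (\<lambda>(d, f). mn f d) ` F \<union> (\<Union>k\<in>{1..D}. (\<lambda>g. mn g k) ` B k)"
  define H where "H = rees_const R ` carrier R \<union> Gs"
  define GRs where "GRs = generate_ring RR H"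
  have finGs: "finite Gs" unfolding Gs_def using F_fin B(2) by auto
  have GsRC: "Gs \<subseteq> RC"
  proof -
    have "mn f d \<in> RC" if "(d, f) \<in> F" for d f using F_in[OF that] mn_RC by blast
    moreover have "mn g k \<in> RC" if "g \<in> B k" for g k
      using genideal_self[OF B(1)] B(3) that mn_RC by blast
    ultimately show ?thesis unfolding Gs_def by auto
  qed
  have rcRC: "rees_const R r \<in> RC" if "r \<in> carrier R" for r
    unfolding rees_const_def using mn_RC[of r 0] a0 that by simp
  have HRC: "H \<subseteq> RC" unfolding H_def using GsRC rcRC by blast
  have GRsRC: "GRs \<subseteq> RC" unfolding GRs_def using RR.generate_ring_incl[of H] HRC by simp
  have Hin: "x \<in> H \<Longrightarrow> x \<in> GRs" for x unfolding GRs_def by (rule generate_ring.incl)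
  have addG: "x \<oplus>\<^bsub>UP R\<^esub> y \<in> GRs" if "x \<in> GRs" "y \<in> GRs" for x y
    using generate_ring.eng_add[of x RR H y] that unfolding GRs_def by simp
  have multG: "x \<otimes>\<^bsub>UP R\<^esub> y \<in> GRs" if "x \<in> GRs" "y \<in> GRs" for x y
    using generate_ring.eng_mult[of x RR H y] that unfolding GRs_def by simp
  have negG: "\<ominus>\<^bsub>UP R\<^esub> x \<in> GRs" if "x \<in> GRs" for x
    using generate_ring.a_inv[of x RR H] that RR_a_inv[of x] GRsRC unfolding GRs_def by auto
  have zeroG: "\<zero>\<^bsub>UP R\<^esub> \<in> GRs" using RR.zero_in_generate[of H] unfolding GRs_def by simp
  have Tid: "ideal {c \<in> a k. mn c k \<in> GRs} R" for k
  proof (rule ideal_simpleI)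
    interpret A: ideal "a k" R by (rule a_ideal)
    show "{c \<in> a k. mn c k \<in> GRs} \<subseteq> carrier R" using a_carr by blast
    show "\<zero> \<in> {c \<in> a k. mn c k \<in> GRs}" using zeroG A.zero_closed by (simp add: P.monom_zero)
    show "x \<oplus> y \<in> {c \<in> a k. mn c k \<in> GRs}" if "x \<in> {c \<in> a k. mn c k \<in> GRs}" "y \<in> {c \<in> a k. mn c k \<in> GRs}" for x y
      using that addG[of "mn x k" "mn y k"] A.a_closed[of x y] a_carr[of x k] a_carr[of y k]
      by (simp add: P.monom_add)
    show "\<ominus> x \<in> {c \<in> a k. mn c k \<in> GRs}" if "x \<in> {c \<in> a k. mn c k \<in> GRs}" for x
      using that negG[of "mn x k"] A.a_inv_closed[of x] a_carr[of x k]
      by (simp add: P.monom_a_inv)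
    show "r \<otimes> x \<in> {c \<in> a k. mn c k \<in> GRs}" if "r \<in> carrier R" "x \<in> {c \<in> a k. mn c k \<in> GRs}" for r x
    proof -
      have x: "x \<in> a k" "mn x k \<in> GRs" using that by auto
      have "mn r 0 \<in> GRs" using Hin that(1) unfolding H_def rees_const_def by blast
      then have "mn r 0 \<otimes>\<^bsub>UP R\<^esub> mn x k \<in> GRs" using multG x(2) by blast
      moreover have "mn (r \<otimes> x) (0 + k) = mn r 0 \<otimes>\<^bsub>UP R\<^esub> mn x k"
        using P.monom_mult[of r x 0 k] that(1) a_carr[OF x(1)] by blast
      ultimately show ?thesis using A.I_l_closed[OF x(1) that(1)] by simp
    qed
  qed
  have main: "\<forall>c\<in>a k. mn c k \<in> GRs" for k
  proof (induction k rule: less_induct)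
    case (less k)
    show ?case
    proof (cases "k = 0")
      case True
      then show ?thesis using Hin a0 unfolding H_def rees_const_def by auto
    next
      case k0: False
      show ?thesis
      proof (cases "k \<le> D")
        case True
        have "B k \<subseteq> {c \<in> a k. mn c k \<in> GRs}"
        proof
          fix g assume g: "g \<in> B k"
          have "mn g k \<in> Gs" unfolding Gs_def using g True k0 by force
          then show "g \<in> {c \<in> a k. mn c k \<in> GRs}"
            using Hin genideal_self[OF B(1)] B(3) g unfolding H_def by blast
        qed
        then have "Idl (B k) \<subseteq> {c \<in> a k. mn c k \<in> GRs}"
          by (rule genideal_minimal[OF Tid])
        then have "a k \<subseteq> {c \<in> a k. mn c k \<in> GRs}" using B(3)[of k] by simp
        then show ?thesis by blast
      next
        case False
        have "gens k \<subseteq> {c \<in> a k. mn c k \<in> GRs}"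
        proof
          fix x assume "x \<in> gens k"
          then obtain d f b where dfb: "(d, f) \<in> F" "d \<le> k" "b \<in> a (k - d)" "x = f \<otimes> b"
            unfolding gens_def by blast
          have d1: "1 \<le> d" and fa: "f \<in> a d" using F_in[OF dfb(1)] by auto
          have "mn f d \<in> Gs" unfolding Gs_def using dfb(1) by force
          then have "mn f d \<in> GRs" using Hin unfolding H_def by blast
          moreover have "mn b (k - d) \<in> GRs" using less.IH[of "k - d"] dfb(3) d1 k0 by auto
          ultimately have "mn f d \<otimes>\<^bsub>UP R\<^esub> mn b (k - d) \<in> GRs" using multG by blast
          moreover have "mn (f \<otimes> b) (d + (k - d)) = mn f d \<otimes>\<^bsub>UP R\<^esub> mn b (k - d)"
            using P.monom_mult[of f b d "k - d"] a_carr[OF fa] a_carr[OF dfb(3)] by blast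
          moreover have "d + (k - d) = k" using dfb(2) by simp
          moreover have "x \<in> a k" using gens_a \<open>x \<in> gens k\<close> by blast
          ultimately show "x \<in> {c \<in> a k. mn c k \<in> GRs}" using dfb(4) by simp
        qed
        then have "J k \<subseteq> {c \<in> a k. mn c k \<in> GRs}"
          unfolding J_def by (rule genideal_minimal[OF Tid])
        then show ?thesis using aJ[of k] False by auto
      qed
    qed
  qed
  have UPam: "abelian_monoid (UP R)" using abelian_group.axioms(1)[OF ring.is_abelian_group[OF UPr]] .
  have "p \<in> GRs" if p: "p \<in> RC" for p
  proof -
    have pc: "p \<in> carrier (UP R)" using p RC_sub by blast
    have pa: "cf p i \<in> a i" for i using p unfolding rees_carrier_def by auto
    have mc: "(\<lambda>i. mn (cf p i) i) \<in> {..n} \<rightarrow> carrier (UP R)" for n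
      using pc by (auto simp: P.monom_closed)
    have "finsum (UP R) (\<lambda>i. mn (cf p i) i) {..n} \<in> GRs" for n
    proof (induction n)
      case 0
      then show ?case using abelian_monoid.finsum_0[OF UPam, of "\<lambda>i. mn (cf p i) i"] mc[of 0] main pa
        by (auto simp: Pi_def)
    next
      case (Suc n)
      then show ?case using abelian_monoid.finsum_Suc[OF UPam mc[of "Suc n"]] main pa addG by auto
    qed
    then show ?thesis using P.up_repr[OF pc] by metis
  qed
  then have "GRs = carrier RR" using GRsRC by auto
  then show ?thesis unfolding fin_gen_algebra_def GRs_def H_def
    using finGs GsRC by auto
qed

end

theorem lemma4p6:
  fixes R :: "('a, 'b) ring_scheme" and m :: "'a set" and a :: "nat \<Rightarrow> 'a set"
  assumes "noetherian_ring R"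
    and "local_ring_with R m"
    and "graded_seq_m_primary R m a"
    and "same_topology R m a"
    and "fin_gen_algebra (R Quot (a 1)) (assoc_graded R a)
           (\<lambda>c. gr_const R a (SOME r. r \<in> c))"
  shows "fin_gen_algebra R (rees_ring R a) (rees_const R)"
proof -
  have cr: "cring R" and mx: "maximalideal m R" and uniq: "\<And>J. maximalideal J R \<Longrightarrow> J = m"
    using assms(2) unfolding local_ring_with_def by auto
  interpret cring R by (rule cr)
  have a0: "a 0 = carrier R" and prim: "\<And>k. 1 \<le> k \<Longrightarrow> m_primary R m (a k)"
    and amono: "\<And>k. a (Suc k) \<subseteq> a k" and aprod: "\<And>k l. ideal_prod R (a k) (a l) \<subseteq> a (k + l)"
    using assms(3) unfolding graded_seq_m_primary_def by auto
  have aid: "ideal (a k) R" for k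
  proof (cases "k = 0")
    case True then show ?thesis using a0 oneideal by simp
  next
    case False then show ?thesis using prim[of k] unfolding m_primary_def primary_ideal_def by auto
  qed
  have amult: "x \<otimes>\<^bsub>R\<^esub> y \<in> a (k + l)" if "x \<in> a k" "y \<in> a l" for x y k l
    using ideal_prod.prod[OF that, of R] aprod by blast
  have rsl: "rees_setup R a"
    by (rule rees_setup.intro[OF cr rees_setup_axioms.intro]) (use a0 aid amono amult in blast)+
  interpret rs: rees_setup R a by (rule rsl)
  obtain G where G: "finite G" "G \<subseteq> carrier (assoc_graded R a)"
    and gen: "generate_ring (assoc_graded R a)
      ((\<lambda>c. gr_const R a (SOME r. r \<in> c)) ` carrier (R Quot (a 1)) \<union> G) = carrier (assoc_graded R a)"
    using assms(5) unfolding fin_gen_algebra_def by blast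
  have "\<forall>g\<in>G. \<exists>p. p \<in> rees_carrier R a \<and> g = rees_shift_ideal R a +>\<^bsub>rees_ring R a\<^esub> p"
    using G(2) unfolding assoc_graded_def FactRing_def A_RCOSETS_def' by auto
  then obtain pr where pr: "\<And>g. g \<in> G \<Longrightarrow> pr g \<in> rees_carrier R a"
    "\<And>g. g \<in> G \<Longrightarrow> g = rees_shift_ideal R a +>\<^bsub>rees_ring R a\<^esub> pr g"
    by metis
  define F where "F = {(n, up_ring.coeff (UP R) p n) | p n. p \<in> pr ` G \<and> 1 \<le> n \<and> n \<le> deg R p}"
  have "F \<subseteq> (\<Union>p\<in>pr ` G. (\<lambda>n. (n, up_ring.coeff (UP R) p n)) ` {..deg R p})"
    unfolding F_def by auto
  moreover have "finite (\<Union>p\<in>pr ` G. (\<lambda>n. (n, up_ring.coeff (UP R) p n)) ` {..deg R p})"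
    using G(1) by auto
  ultimately have Ffin: "finite F" by (rule finite_subset)
  have Fin: "1 \<le> d \<and> f \<in> a d" if "(d, f) \<in> F" for d f
    using that pr(1) unfolding F_def rees_carrier_def by auto
  have rfl: "rees_F R a F"
    by (rule rees_F.intro[OF rsl rees_F_axioms.intro]) (use Ffin Fin in blast)+
  interpret rf: rees_F R a F by (rule rfl)
  have GQ: "G \<subseteq> (\<lambda>p. rees_shift_ideal R a +>\<^bsub>rees_ring R a\<^esub> p) ` rf.Q"
  proof
    fix g assume g: "g \<in> G"
    let ?p = "pr g"
    have p: "?p \<in> rees_carrier R a" using pr(1)[OF g] .
    have pc: "?p \<in> carrier (UP R)" using p unfolding rees_carrier_def by auto
    have "up_ring.coeff (UP R) ?p n \<in> rf.K n" if n: "1 \<le> n" for n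
    proof (cases "n \<le> deg R ?p")
      case True
      have fa: "up_ring.coeff (UP R) ?p n \<in> a n" using p unfolding rees_carrier_def by auto
      have "(n, up_ring.coeff (UP R) ?p n) \<in> F" unfolding F_def using g n True by blast
      moreover have "\<one>\<^bsub>R\<^esub> \<in> a (n - n)" using a0 by simp
      ultimately have "up_ring.coeff (UP R) ?p n \<otimes>\<^bsub>R\<^esub> \<one>\<^bsub>R\<^esub> \<in> rf.gens n" unfolding rf.gens_def by blast
      then show ?thesis using rf.gens_K rs.a_carr[OF fa] by auto
    next
      case False
      then have "up_ring.coeff (UP R) ?p n = \<zero>\<^bsub>R\<^esub>" using rs.P.deg_aboveD[of ?p n] pc by simp
      then show ?thesis
        using additive_subgroup.zero_closed[OF ideal.axioms(1)[OF rf.K_ideal]] by simp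
    qed
    then have "?p \<in> rf.Q" unfolding rf.Q_def using p by auto
    then show "g \<in> (\<lambda>p. rees_shift_ideal R a +>\<^bsub>rees_ring R a\<^esub> p) ` rf.Q" using pr(2)[OF g] by blast
  qed
  have aK: "a n \<subseteq> rf.K n" if "1 \<le> n" for n
    using rf.gr_lemma[OF gen GQ that] by blast
  have units: "y \<in> Units R" if "y \<in> carrier R" "y \<notin> m" for y
    using noetherian_ring.local_units[OF assms(1) cr uniq that] .
  have Mi: "ideal m R" using mx maximalideal.axioms(1) by blast
  have M1: "\<one>\<^bsub>R\<^esub> \<notin> m"
    using mx ideal.one_imp_carrier[OF Mi] maximalideal.I_notcarr by metis
  have aJ: "a n \<subseteq> rf.J n" if "rf.D \<le> n" for n
    using rf.aJ[OF aK that assms(1) Mi M1 units assms(4)] by blast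
  show ?thesis using rf.generation[OF aJ assms(1)] by blast
qed

end
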